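(* Let $(\mathfrak g,[\cdot,\cdot,\cdot])$ be a Lie triple system, $(V;\rho)$ a representation of $\mathfrak g$, and $T:V\to\mathfrak g$ a linear map. Let $\Theta$ be the semidirect product bracket on $\mathfrak g\oplus V$ and $\Theta^T$ its twisting by $T$. Then $((\mathfrak g\oplus V,\Theta^T),\mathfrak g,V)$ is a twilled Lie triple system (i.e. $\mathfrak g$ and $V$ are subalgebras for $\Theta^T$) if and only if $T$ is a relative Rota–Baxter operator on $\mathfrak g$ with respect to $(V;\rho)$.
   Context: All vector spaces are over a field of characteristic $0$. A Lie triple system is a vector space with a trilinear bracket satisfying $[x,x,y]=0$, $[x,y,z]+[y,z,x]+[z,x,y]=0$ and $[x,y,[z,w,t]]=[[x,y,z],w,t]+[z,[x,y,w],t]+[z,w,[x,y,t]]$. A representation is a bilinear $\rho:\otimes^2\mathfrak g\to\mathfrak{gl}(V)$ with $D(x,y):=\rho(y,x)-\rho(x,y)$, satisfying $\rho(z,w)\rho(x,y)-\rho(y,w)\rho(x,z)-\rho(x,[y,z,w])+D(y,z)\rho(x,w)=0$ and $\rho([x,y,z],w)+\rho(z,[x,y,w])=[D(x,y),\rho(z,w)]$. The semidirect product bracket is $\Theta(x+u,y+v,z+w)=[x,y,z]+D(x,y)w+\rho(y,z)u-\rho(x,z)v$ ($x,y,z\in\mathfrak g$, $u,v,w\in V$), a Lie triple system on $\mathfrak g\oplus V$. A relative Rota–Baxter operator is a linear $T:V\to\mathfrak g$ with $[Tu,Tv,Tw]=T(D(Tu,Tv)w+\rho(Tv,Tw)u-\rho(Tu,Tw)v)$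 for all $u,v,w\in V$. Cochains and twisting: $C^p(\mathcal G,\mathcal G)=\mathrm{Hom}(\otimes^{2p+1}\mathcal G,\mathcal G)$, arguments $(\mathfrak X_1,\dots,\mathfrak X_p,x)$ with $\mathfrak X_i=x_i\otimes y_i$; for $P\in C^p,Q\in C^q$, $(P\circ Q)(\mathfrak X_1,\dots,\mathfrak X_{p+q},x)=\sum_{k=1}^p(-1)^{(k-1)q}\sum_{\sigma\in\mathbb S(k-1,q)}(-1)^\sigma P(\mathfrak X_{\sigma(1)},\dots,\mathfrak X_{\sigma(k-1)},Q(\mathfrak X_{\sigma(k)},\dots,\mathfrak X_{\sigma(k+q-1)},x_{k+q})\otimes y_{k+q},\mathfrak X_{k+q+1},\dots,x)+\sum_{k=1}^p(-1)^{(k-1)q}\sum_{\sigma\in\mathbb S(k-1,q)}(-1)^\sigma P(\mathfrak X_{\sigma(1)},\dots,\mathfrak X_{\sigma(k-1)},x_{k+q}\otimes Q(\mathfrak X_{\sigma(k)},\dots,\mathfrak X_{\sigma(k+q-1)},y_{k+q}),\mathfrak X_{k+q+1},\dots,x)+\sum_{\sigma\in\mathbb S(p,q)}(-1)^\sigma P(\mathfrak X_{\sigma(1)},\dots,\mathfrak X_{\sigma(p)},Q(\mathfrak X_{\sigma(p+1)},\dots,\mathfrak X_{\sigma(p+q)},x))$ and $[P,Q]_{\mathsf{LTS}}=P\circ Q-(-1)^{pq}Q\circ P$. With $\hat T\in C^0(\mathfrak g\oplus V,\mathfrak g\oplus V)$, $\hat T(x,u)=(Tu,0)$, and $X_{\hat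 T}(\cdot)=[\cdot,\hat T]_{\mathsf{LTS}}$, the twisting is $\Theta^T=\sum_{k\ge0}\frac1{k!}X_{\hat T}^k(\Theta)$ (finite sum). *)

theory Defs
  imports Main "HOL.Vector_Spaces" "HOL-Library.Product_Plus" "HOL-Combinatorics.Permutations"
begin

definition trilinear ::
  "('k::field \<Rightarrow> 'a::ab_group_add \<Rightarrow> 'a) \<Rightarrow> ('k \<Rightarrow> 'b::ab_group_add \<Rightarrow> 'b) \<Rightarrow>
   ('a \<Rightarrow> 'a \<Rightarrow> 'a \<Rightarrow> 'b) \<Rightarrow> bool" where
  "trilinear sa sb f \<longleftrightarrow>
     (\<forall>y z. Vector_Spaces.linear sa sb (\<lambda>x. f x y z)) \<and>
     (\<forall>x z. Vector_Spaces.linear sa sb (\<lambda>y. f x y z)) \<and>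
     (\<forall>x y. Vector_Spaces.linear sa sb (\<lambda>z. f x y z))"

definition lie_triple_system ::
  "('k::field \<Rightarrow> 'g::ab_group_add \<Rightarrow> 'g) \<Rightarrow> ('g \<Rightarrow> 'g \<Rightarrow> 'g \<Rightarrow> 'g) \<Rightarrow> bool" where
  "lie_triple_system sg br \<longleftrightarrow>
     vector_space sg \<and> trilinear sg sg br \<and>
     (\<forall>x y. br x x y = 0) \<and>
     (\<forall>x y z. br x y z + br y z x + br z x y = 0) \<and>
     (\<forall>x y z w t. br x y (br z w t) =
         br (br x y z) w t + br z (br x y w) t + br z w (br x y t))"

definition repD :: "('g \<Rightarrow> 'g \<Rightarrow> 'v \<Rightarrow> 'v::ab_group_add) \<Rightarrow> 'g \<Rightarrow> 'g \<Rightarrow> 'v \<Rightarrow> 'v" where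
  "repD rho x y = (\<lambda>v. rho y x v - rho x y v)"

definition lts_representation ::
  "('k::field \<Rightarrow> 'g::ab_group_add \<Rightarrow> 'g) \<Rightarrow> ('g \<Rightarrow> 'g \<Rightarrow> 'g \<Rightarrow> 'g) \<Rightarrow>
   ('k \<Rightarrow> 'v::ab_group_add \<Rightarrow> 'v) \<Rightarrow> ('g \<Rightarrow> 'g \<Rightarrow> 'v \<Rightarrow> 'v) \<Rightarrow> bool" where
  "lts_representation sg br sv rho \<longleftrightarrow>
     vector_space sv \<and>
     (\<forall>x y. Vector_Spaces.linear sv sv (rho x y)) \<and>
     (\<forall>y v. Vector_Spaces.linear sg sv (\<lambda>x. rho x y v)) \<and>
     (\<forall>x v. Vector_Spaces.linear sg sv (\<lambda>y. rho x y v)) \<and>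
     (\<forall>x y z w v. rho z w (rho x y v) - rho y w (rho x z v) - rho x (br y z w) v
                   + repD rho y z (rho x w v) = 0) \<and>
     (\<forall>x y z w v. rho (br x y z) w v + rho z (br x y w) v =
                   repD rho x y (rho z w v) - rho z w (repD rho x y v))"

definition relative_RB ::
  "('g \<Rightarrow> 'g \<Rightarrow> 'g \<Rightarrow> 'g) \<Rightarrow> ('g \<Rightarrow> 'g \<Rightarrow> 'v \<Rightarrow> 'v::ab_group_add) \<Rightarrow> ('v \<Rightarrow> 'g) \<Rightarrow> bool" where
  "relative_RB br rho T \<longleftrightarrow>
     (\<forall>u v w. br (T u) (T v) (T w) =
        T (repD rho (T u) (T v) w + rho (T v) (T w) u - rho (T u) (T w) v))"

definition prod_scale :: "('k \<Rightarrow> 'g \<Rightarrow> 'g) \<Rightarrow> ('k \<Rightarrow> 'v \<Rightarrow> 'v) \<Rightarrow> 'k \<Rightarrow> 'g \<times> 'v \<Rightarrow> 'g \<times> 'v" where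
  "prod_scale sg sv c p = (sg c (fst p), sv c (snd p))"

text \<open>Cochains: an element of C^p(G,G) = Hom(tensor^(2p+1) G, G) is represented as a
function taking the list [X_1,...,X_p] of pairs X_i = (x_i,y_i) and the last argument x
(only lists of length p are meaningful).\<close>
type_synonym 'a cochain = "('a \<times> 'a) list \<Rightarrow> 'a \<Rightarrow> 'a"

text \<open>(i,j)-shuffles of {0..<i+j} (0-indexed version of S(i,j)).\<close>
definition shuffles :: "nat \<Rightarrow> nat \<Rightarrow> (nat \<Rightarrow> nat) set" where
  "shuffles i j = {\<sigma>. \<sigma> permutes {0..<i+j} \<and>
      (\<forall>a b. a < b \<and> b < i \<longrightarrow> \<sigma> a < \<sigma> b) \<and>
      (\<forall>a b. i \<le> a \<and> a < b \<and> b < i + j \<longrightarrow> \<sigma> a < \<sigma> b)}"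

text \<open>The composition P \<circ> Q for P in C^p, Q in C^q (formula of the paper, 0-indexed:
X_m is Xs!(m-1)).\<close>
definition lts_circ ::
  "('k::field \<Rightarrow> 'a::ab_group_add \<Rightarrow> 'a) \<Rightarrow> nat \<Rightarrow> nat \<Rightarrow> 'a cochain \<Rightarrow> 'a cochain \<Rightarrow> 'a cochain" where
  "lts_circ s p q P Q = (\<lambda>Xs x.
     (\<Sum>k\<in>{1..p}. s ((-1) ^ ((k - 1) * q))
        (\<Sum>\<sigma>\<in>shuffles (k - 1) q. s (of_int (sign \<sigma>))
           (P (map (\<lambda>i. Xs ! \<sigma> i) [0..<k - 1]
               @ [(Q (map (\<lambda>i. Xs ! \<sigma> i) [k - 1..<k - 1 + q]) (fst (Xs ! (k + q - 1))),
                   snd (Xs ! (k + q - 1)))]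
               @ drop (k + q) Xs) x)))
   + (\<Sum>k\<in>{1..p}. s ((-1) ^ ((k - 1) * q))
        (\<Sum>\<sigma>\<in>shuffles (k - 1) q. s (of_int (sign \<sigma>))
           (P (map (\<lambda>i. Xs ! \<sigma> i) [0..<k - 1]
               @ [(fst (Xs ! (k + q - 1)),
                   Q (map (\<lambda>i. Xs ! \<sigma> i) [k - 1..<k - 1 + q]) (snd (Xs ! (k + q - 1))))]
               @ drop (k + q) Xs) x)))
   + (\<Sum>\<sigma>\<in>shuffles p q. s (of_int (sign \<sigma>))
        (P (map (\<lambda>i. Xs ! \<sigma> i) [0..<p]) (Q (map (\<lambda>i. Xs ! \<sigma> i) [p..<p + q]) x))))"

definition lts_bracket ::
  "('k::field \<Rightarrow> 'a::ab_group_add \<Rightarrow> 'a) \<Rightarrow> nat \<Rightarrow> nat \<Rightarrow> 'a cochain \<Rightarrow> 'a cochain \<Rightarrow> 'a cochain" where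
  "lts_bracket s p q P Q = (\<lambda>Xs x.
     lts_circ s p q P Q Xs x - s ((-1) ^ (p * q)) (lts_circ s q p Q P Xs x))"

definition semidirect_bracket ::
  "('g \<Rightarrow> 'g \<Rightarrow> 'g \<Rightarrow> 'g) \<Rightarrow> ('g \<Rightarrow> 'g \<Rightarrow> 'v \<Rightarrow> 'v::ab_group_add) \<Rightarrow>
   'g \<times> 'v \<Rightarrow> 'g \<times> 'v \<Rightarrow> 'g \<times> 'v \<Rightarrow> 'g \<times> 'v" where
  "semidirect_bracket br rho a b c =
     (br (fst a) (fst b) (fst c),
      repD rho (fst a) (fst b) (snd c) + rho (fst b) (fst c) (snd a) - rho (fst a) (fst c) (snd b))"

definition semidirect_cochain ::
  "('g \<Rightarrow> 'g \<Rightarrow> 'g \<Rightarrow> 'g) \<Rightarrow> ('g \<Rightarrow> 'g \<Rightarrow> 'v \<Rightarrow> 'v::ab_group_add) \<Rightarrow> ('g \<times> 'v) cochain" where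
  "semidirect_cochain br rho = (\<lambda>Xs c. semidirect_bracket br rho (fst (Xs ! 0)) (snd (Xs ! 0)) c)"

definition hatT :: "('v::zero \<Rightarrow> 'g) \<Rightarrow> ('g \<times> 'v) cochain" where
  "hatT T = (\<lambda>Xs a. (T (snd a), 0))"

definition X_hatT :: "('k::field \<Rightarrow> 'g \<times> 'v \<Rightarrow> 'g \<times> 'v) \<Rightarrow> ('v \<Rightarrow> 'g) \<Rightarrow>
    ('g::ab_group_add \<times> 'v::ab_group_add) cochain \<Rightarrow> ('g \<times> 'v) cochain" where
  "X_hatT s T P = lts_bracket s 1 0 P (hatT T)"

text \<open>Twisting Theta^T = sum_k 1/k! X^k(Theta); the sum is finite: it is taken up to the
least N beyond which all X^m(Theta) vanish (on arguments of the correct arity).\<close>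
definition twisting :: "('k::field_char_0 \<Rightarrow> 'g \<times> 'v \<Rightarrow> 'g \<times> 'v) \<Rightarrow> ('v \<Rightarrow> 'g) \<Rightarrow>
    ('g::ab_group_add \<times> 'v::ab_group_add) cochain \<Rightarrow> ('g \<times> 'v) cochain" where
  "twisting s T Th = (\<lambda>Xs x.
     (\<Sum>k < (LEAST N. \<forall>m\<ge>N. \<forall>Ys y. length Ys = 1 \<longrightarrow> (X_hatT s T ^^ m) Th Ys y = 0).
        s (inverse (fact k)) ((X_hatT s T ^^ k) Th Xs x)))"

definition twilled :: "('g::zero \<times> 'v::zero) cochain \<Rightarrow> bool" where
  "twilled B \<longleftrightarrow>
     (\<forall>x y z. snd (B [((x, 0), (y, 0))] (z, 0)) = 0) \<and>
     (\<forall>u v w. fst (B [((0, u), (0, v))] (0, w)) = 0)"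

end

theory Submission
  imports Defs
begin

lemma lin_facts:
  assumes "Vector_Spaces.linear s1 s2 f"
  shows "f 0 = 0" "f (x+y) = f x + f y" "f (x - y) = f x - f y" "f (-x) = - f x"
    "f (s1 c x) = s2 c (f x)"
proof -
  interpret linear s1 s2 f by fact
  show "f 0 = 0" "f (x+y) = f x + f y" "f (x - y) = f x - f y" "f (-x) = - f x"
    "f (s1 c x) = s2 c (f x)" by (simp_all add: add diff neg scale)
qed

definition phi :: "('a::ab_group_add \<Rightarrow> 'a) \<Rightarrow> ('a \<Rightarrow> 'a \<Rightarrow> 'a \<Rightarrow> 'a) \<Rightarrow> 'a \<Rightarrow> 'a \<Rightarrow> 'a \<Rightarrow> 'a" where
  "phi t f = (\<lambda>a b c. f (t a) b c + f a (t b) c + f a b (t c) - t (f a b c))"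

fun GG :: "('a::ab_group_add \<Rightarrow> 'a) \<Rightarrow> ('a \<Rightarrow> 'a \<Rightarrow> 'a \<Rightarrow> 'a) \<Rightarrow> nat \<Rightarrow> 'a \<Rightarrow> 'a \<Rightarrow> 'a \<Rightarrow> 'a" where
  "GG t f 0 a b c = f a b c"
| "GG t f (Suc 0) a b c = f (t a) b c + f a (t b) c + f a b (t c) - t (f a b c)"
| "GG t f (Suc (Suc 0)) a b c = f (t a) (t b) c + f (t a) b (t c) + f a (t b) (t c)
     - t (f (t a) b c + f a (t b) c + f a b (t c))"
| "GG t f (Suc (Suc (Suc 0))) a b c = f (t a) (t b) (t c)
     - t (f (t a) (t b) c + f (t a) b (t c) + f a (t b) (t c))"
| "GG t f (Suc (Suc (Suc (Suc 0)))) a b c = - t (f (t a) (t b) (t c))"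
| "GG t f (Suc (Suc (Suc (Suc (Suc n))))) a b c = 0"

context vector_space begin

lemma scale_Suc: "scale (of_nat (Suc n)) x = x + scale (of_nat n) x"
  by (simp add: scale_left_distrib)

lemma phi_scale:
  assumes tadd: "\<And>x y. t (x + y) = t x + t y" and tsc: "\<And>r x. t (scale r x) = scale r (t x)"
  shows "phi t (\<lambda>a b c. scale r (g a b c)) = (\<lambda>a b c. scale r (phi t g a b c))"
proof -
  have td: "t (x - y) = t x - t y" for x y
    by (metis add_diff_cancel tadd diff_add_cancel)
  show ?thesis unfolding phi_def
    by (simp add: tsc scale_right_distrib scale_right_diff_distrib)
qed

lemma phi_GG:
  assumes tadd: "\<And>x y. t (x + y) = t x + t y" and tsc: "\<And>r x. t (scale r x) = scale r (t x)"
    and tt: "\<And>x. t (t x) = 0"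
    and f0: "\<And>b c. f 0 b c = 0" "\<And>a c. f a 0 c = 0" "\<And>a b. f a b 0 = 0"
  shows "phi t (GG t f k) = (\<lambda>a b c. scale (of_nat (Suc k)) (GG t f (Suc k) a b c))"
proof -
  have t0: "t 0 = 0" by (metis add_cancel_right_right tadd)
  have td: "t (x - y) = t x - t y" for x y
    by (metis add_diff_cancel tadd diff_add_cancel)
  have tm: "t (- x) = - t x" for x
    by (metis diff_0 t0 td)
  consider "k = 0" | "k = Suc 0" | "k = Suc (Suc 0)" | "k = Suc (Suc (Suc 0))" | "k = Suc (Suc (Suc (Suc 0)))" | n where "k = Suc (Suc (Suc (Suc (Suc n))))"
    by (metis not0_implies_Suc)
  then show ?thesis
  proof cases
    case 1 then show ?thesis by (simp add: phi_def fun_eq_iff)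
  next
    case 2 then show ?thesis
      by (simp only: scale_Suc) (simp add: phi_def fun_eq_iff tadd td tm tt f0 t0 algebra_simps)
  next
    case 3 then show ?thesis
      by (simp only: scale_Suc) (simp add: phi_def fun_eq_iff tadd td tm tt f0 t0 algebra_simps)
  next
    case 4 then show ?thesis
      by (simp only: scale_Suc) (simp add: phi_def fun_eq_iff tadd td tm tt f0 t0 algebra_simps)
  next
    case 5 then show ?thesis
      by (simp only: scale_Suc) (simp add: phi_def fun_eq_iff tadd td tm tt f0 t0 algebra_simps)
  next
    case 6 then show ?thesis
      by (simp add: phi_def fun_eq_iff t0)
  qed
qed

lemma phi_pow:
  assumes tadd: "\<And>x y. t (x + y) = t x + t y" and tsc: "\<And>r x. t (scale r x) = scale r (t x)"
    and tt: "\<And>x. t (t x) = 0"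
    and f0: "\<And>b c. f 0 b c = 0" "\<And>a c. f a 0 c = 0" "\<And>a b. f a b 0 = 0"
  shows "(phi t ^^ k) f = (\<lambda>a b c. scale (of_nat (fact k)) (GG t f k a b c))"
proof (induction k)
  case 0 then show ?case by (simp add: fun_eq_iff)
next
  case (Suc k)
  have "(phi t ^^ Suc k) f = phi t (\<lambda>a b c. scale (of_nat (fact k)) (GG t f k a b c))"
    using Suc by simp
  also have "\<dots> = (\<lambda>a b c. scale (of_nat (fact k)) (phi t (GG t f k) a b c))"
    by (rule phi_scale[OF tadd tsc])
  also have "\<dots> = (\<lambda>a b c. scale (of_nat (fact (Suc k))) (GG t f (Suc k) a b c))"
    by (simp add: phi_GG[of t f, OF tadd tsc tt f0] fact_Suc of_nat_mult algebra_simps)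
  finally show ?case .
qed

end

lemma vs_prod:
  assumes "vector_space sg" "vector_space sv"
  shows "vector_space (prod_scale sg sv)"
proof -
  interpret g: vector_space sg by fact
  interpret v: vector_space sv by fact
  show ?thesis
    by unfold_locales (auto simp: prod_scale_def g.scale_right_distrib g.scale_left_distrib
        v.scale_right_distrib v.scale_left_distrib)
qed

lemma shuffles_00: "shuffles 0 0 = {id}" by (auto simp: shuffles_def)
lemma shuffles_10: "shuffles (Suc 0) 0 = {id}" by (auto simp: shuffles_def)
lemma shuffles_01: "shuffles 0 (Suc 0) = {id}" by (auto simp: shuffles_def)

lemma X_step:
  assumes "vector_space s"
  shows "X_hatT s T (\<lambda>Xs x. f (fst (Xs!0)) (snd (Xs!0)) x)
     = (\<lambda>Xs x. phi (\<lambda>p. (T (snd p), 0)) f (fst (Xs!0)) (snd (Xs!0)) x)"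
proof -
  interpret vector_space s by fact
  show ?thesis
    by (simp add: X_hatT_def lts_bracket_def lts_circ_def shuffles_00 shuffles_10 shuffles_01
        phi_def hatT_def fun_eq_iff)
qed


lemma X_pow:
  assumes "vector_space s"
  shows "(X_hatT s T ^^ m) (\<lambda>Xs x. f (fst (Xs!0)) (snd (Xs!0)) x)
     = (\<lambda>Xs x. (phi (\<lambda>p. (T (snd p), 0)) ^^ m) f (fst (Xs!0)) (snd (Xs!0)) x)"
  by (induction m) (simp_all add: X_step[OF assms])

theorem proposition5p14:
  fixes sg :: "'k::field_char_0 \<Rightarrow> 'g::ab_group_add \<Rightarrow> 'g"
    and sv :: "'k \<Rightarrow> 'v::ab_group_add \<Rightarrow> 'v"
    and br :: "'g \<Rightarrow> 'g \<Rightarrow> 'g \<Rightarrow> 'g"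
    and rho :: "'g \<Rightarrow> 'g \<Rightarrow> 'v \<Rightarrow> 'v"
    and T :: "'v \<Rightarrow> 'g"
  assumes "lie_triple_system sg br"
    and "lts_representation sg br sv rho"
    and "Vector_Spaces.linear sv sg T"
  shows "twilled (twisting (prod_scale sg sv) T (semidirect_cochain br rho))
         \<longleftrightarrow> relative_RB br rho T"
proof -
  have vg: "vector_space sg" using assms(1) by (simp add: lie_triple_system_def)
  have vv: "vector_space sv" using assms(2) by (simp add: lts_representation_def)
  interpret g: vector_space sg by (rule vg)
  interpret v: vector_space sv by (rule vv)
  define s where "s = prod_scale sg sv"
  have vs: "vector_space s" unfolding s_def by (rule vs_prod[OF vg vv])
  interpret p: vector_space s by (rule vs)
  have tri: "trilinear sg sg br" using assms(1) by (simp add: lie_triple_system_def)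
  have br0: "br 0 y z = 0" "br x 0 z = 0" "br x y 0 = 0" for x y z
    using tri lin_facts(1) unfolding trilinear_def by metis+
  have rl1: "Vector_Spaces.linear sv sv (rho x y)" for x y
    using assms(2) by (simp add: lts_representation_def)
  have rl2: "Vector_Spaces.linear sg sv (\<lambda>x. rho x y v)" for y v
    using assms(2) by (simp add: lts_representation_def)
  have rl3: "Vector_Spaces.linear sg sv (\<lambda>y. rho x y v)" for x v
    using assms(2) by (simp add: lts_representation_def)
  have rho0: "rho x y 0 = 0" "rho 0 y v = 0" "rho x 0 v = 0" for x y v
    using lin_facts(1)[OF rl1] lin_facts(1)[OF rl2] lin_facts(1)[OF rl3] by auto
  have T0: "T 0 = 0" and Tadd: "T (a + b) = T a + T b" and Tdiff: "T (a - b) = T a - T b"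
    and Tsc: "T (sv r a) = sg r (T a)" for a b r
    using lin_facts[OF assms(3)] by auto
  define t :: "'g \<times> 'v \<Rightarrow> 'g \<times> 'v" where "t = (\<lambda>p. (T (snd p), 0))"
  define th where "th = semidirect_bracket br rho"
  have tadd: "t (x + y) = t x + t y" for x y by (simp add: t_def Tadd)
  have tsc: "t (s r x) = s r (t x)" for r x by (simp add: t_def s_def prod_scale_def Tsc)
  have tt: "t (t x) = 0" for x by (simp add: t_def T0 zero_prod_def)
  have th0: "th 0 b c = 0" "th a 0 c = 0" "th a b 0 = 0" for a b c
    by (simp_all add: th_def semidirect_bracket_def repD_def br0 rho0 zero_prod_def)
  have Xp: "(X_hatT s T ^^ m) (semidirect_cochain br rho) Xs x
      = s (of_nat (fact m)) (GG t th m (fst (Xs!0)) (snd (Xs!0)) x)" for m Xs x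
  proof -
    have "(X_hatT s T ^^ m) (semidirect_cochain br rho)
        = (\<lambda>Xs x. (phi t ^^ m) th (fst (Xs!0)) (snd (Xs!0)) x)"
      unfolding semidirect_cochain_def th_def t_def by (rule X_pow[OF vs])
    then show ?thesis by (simp add: p.phi_pow[of t th m, OF tadd tsc tt th0])
  qed
  have G4: "GG t th m a b c = 0" if m4: "m \<ge> Suc (Suc (Suc (Suc 0)))" for m a b c
  proof -
    obtain n where "m = Suc (Suc (Suc (Suc n)))" using m4 by (metis add_Suc le_Suc_ex plus_nat.add_0)
    then show ?thesis
      by (cases n) (simp_all add: t_def th_def semidirect_bracket_def repD_def rho0 T0 zero_prod_def)
  qed
  define N where "N = (LEAST N. \<forall>m\<ge>N. \<forall>Ys y. length Ys = 1 \<longrightarrow>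
      (X_hatT s T ^^ m) (semidirect_cochain br rho) Ys y = 0)"
  have P4: "\<forall>m\<ge>Suc (Suc (Suc (Suc 0))). \<forall>Ys y. length Ys = 1 \<longrightarrow>
      (X_hatT s T ^^ m) (semidirect_cochain br rho) Ys y = 0"
    by (simp add: Xp G4)
  have N4: "N \<le> Suc (Suc (Suc (Suc 0)))" unfolding N_def by (rule Least_le) (rule P4)
  have PN: "\<forall>m\<ge>N. \<forall>Ys y. length Ys = 1 \<longrightarrow>
      (X_hatT s T ^^ m) (semidirect_cochain br rho) Ys y = 0"
    unfolding N_def by (rule LeastI) (rule P4)
  have inv: "s (inverse (fact k)) (s (of_nat (fact k)) z) = z" for k z
    by (simp add: of_nat_fact)
  have tw: "twisting s T (semidirect_cochain br rho) [(a, b)] c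
      = GG t th 0 a b c + GG t th (Suc 0) a b c + GG t th (Suc (Suc 0)) a b c
        + GG t th (Suc (Suc (Suc 0))) a b c" for a b c
  proof -
    let ?g = "\<lambda>k. s (inverse (fact k)) ((X_hatT s T ^^ k) (semidirect_cochain br rho) [(a, b)] c)"
    have "twisting s T (semidirect_cochain br rho) [(a, b)] c = (\<Sum>k<N. ?g k)"
      unfolding twisting_def N_def by simp
    also have "\<dots> = (\<Sum>k<Suc (Suc (Suc (Suc 0))). ?g k)"
    proof (rule sum.mono_neutral_left)
      show "\<forall>i\<in>{..<Suc (Suc (Suc (Suc 0)))} - {..<N}. ?g i = 0"
      proof
        fix i assume "i \<in> {..<Suc (Suc (Suc (Suc 0)))} - {..<N}"
        then have "N \<le> i" by auto
        then show "?g i = 0" using PN[rule_format, of i "[(a, b)]" c] by simp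
      qed
    qed (use N4 in auto)
    also have "\<dots> = GG t th 0 a b c + GG t th (Suc 0) a b c + GG t th (Suc (Suc 0)) a b c
        + GG t th (Suc (Suc (Suc 0))) a b c"
      by (simp only: Xp inv) (simp add: add.assoc)
    finally show ?thesis .
  qed
  have c1: "snd (twisting s T (semidirect_cochain br rho) [((x, 0), (y, 0))] (z, 0)) = 0" for x y z
    unfolding tw by (simp add: t_def th_def semidirect_bracket_def repD_def rho0 T0 br0)
  have c2: "fst (twisting s T (semidirect_cochain br rho) [((0, u), (0, v))] (0, w))
     = br (T u) (T v) (T w) - T (repD rho (T u) (T v) w + rho (T v) (T w) u - rho (T u) (T w) v)"
    for u v w
    unfolding tw by (simp add: t_def th_def semidirect_bracket_def repD_def rho0 T0 br0 Tadd Tdiff)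
  show ?thesis
    unfolding s_def[symmetric] twilled_def relative_RB_def using c1 c2 by simp
qed

end
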